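(* Let $(\mathcal A;\mathcal E)$ be an exact category with exact coproducts and let $\mathcal I$ be a left closed ideal. If $a^j\in\mathcal I$ for all $j$ in a set $J$, then the coproduct morphism $\amalg_j a^j:\amalg_j A^j_0\to\amalg_j A^j_1$ belongs to $\mathcal I$.
   Context: An exact category $(\mathcal A;\mathcal E)$ is an additive category with a class of conflations satisfying the Quillen–Keller axioms; it has exact coproducts if set-indexed coproducts exist and coproducts of conflations are conflations. $\mathrm{Ext}(A,B)$ is the group of conflations $B\to C\to A$. For $a:A_0\to A_1$, $b:B_0\to B_1$, $\mathrm{Ext}(a,b):\mathrm{Ext}(A_1,B_0)\to\mathrm{Ext}(A_0,B_1)$ is pushout along $b$ followed by pullback along $a$. For a class $\mathcal M$ of morphisms, ${}^\perp\mathcal M$ is the ideal of morphisms $a$ with $\mathrm{Ext}(a,m)=0$ for all $m\in\mathcal M$. An ideal is left closed if it is of the form ${}^\perp\mathcal M$ for some class $\mathcal M$ of morphisms. *)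

theory Defs
  imports Main
begin

text \<open>A category with additive structure on hom-sets, given as a record:
  objects, arrows, domain, codomain, composition (Cmp g f = g after f),
  identities, addition of parallel arrows and zero arrows.\<close>

record ('o, 'm) cat =
  Obj :: "'o set"
  Arr :: "'m set"
  Dom :: "'m \<Rightarrow> 'o"
  Cod :: "'m \<Rightarrow> 'o"
  Cmp :: "'m \<Rightarrow> 'm \<Rightarrow> 'm"
  Idt :: "'o \<Rightarrow> 'm"
  Add :: "'m \<Rightarrow> 'm \<Rightarrow> 'm"
  Zer :: "'o \<Rightarrow> 'o \<Rightarrow> 'm"

definition hom :: "('o, 'm) cat \<Rightarrow> 'o \<Rightarrow> 'o \<Rightarrow> 'm set" where
  "hom C A B = {f \<in> Arr C. Dom C f = A \<and> Cod C f = B}"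

definition category :: "('o, 'm) cat \<Rightarrow> bool" where
  "category C \<longleftrightarrow>
     (\<forall>f\<in>Arr C. Dom C f \<in> Obj C \<and> Cod C f \<in> Obj C) \<and>
     (\<forall>A\<in>Obj C. Idt C A \<in> hom C A A) \<and>
     (\<forall>f\<in>Arr C. \<forall>g\<in>Arr C. Cod C f = Dom C g \<longrightarrow> Cmp C g f \<in> hom C (Dom C f) (Cod C g)) \<and>
     (\<forall>f\<in>Arr C. \<forall>g\<in>Arr C. \<forall>h\<in>Arr C. Cod C f = Dom C g \<longrightarrow> Cod C g = Dom C h \<longrightarrow>
        Cmp C h (Cmp C g f) = Cmp C (Cmp C h g) f) \<and>
     (\<forall>f\<in>Arr C. Cmp C f (Idt C (Dom C f)) = f \<and> Cmp C (Idt C (Cod C f)) f = f)"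

definition preadditive :: "('o, 'm) cat \<Rightarrow> bool" where
  "preadditive C \<longleftrightarrow>
     (\<forall>A\<in>Obj C. \<forall>B\<in>Obj C.
        Zer C A B \<in> hom C A B \<and>
        (\<forall>f\<in>hom C A B. \<forall>g\<in>hom C A B. Add C f g \<in> hom C A B \<and> Add C f g = Add C g f) \<and>
        (\<forall>f\<in>hom C A B. \<forall>g\<in>hom C A B. \<forall>h\<in>hom C A B.
            Add C (Add C f g) h = Add C f (Add C g h)) \<and>
        (\<forall>f\<in>hom C A B. Add C f (Zer C A B) = f) \<and>
        (\<forall>f\<in>hom C A B. \<exists>g\<in>hom C A B. Add C f g = Zer C A B)) \<and>
     (\<forall>A\<in>Obj C. \<forall>B\<in>Obj C. \<forall>D\<in>Obj C.
        \<forall>f\<in>hom C A B. \<forall>f'\<in>hom C A B. \<forall>g\<in>hom C B D. \<forall>g'\<in>hom C B D.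
          Cmp C g (Add C f f') = Add C (Cmp C g f) (Cmp C g f') \<and>
          Cmp C (Add C g g') f = Add C (Cmp C g f) (Cmp C g' f))"

definition zero_object :: "('o, 'm) cat \<Rightarrow> 'o \<Rightarrow> bool" where
  "zero_object C Z \<longleftrightarrow> Z \<in> Obj C \<and>
     (\<forall>X\<in>Obj C. (\<exists>!f. f \<in> hom C Z X) \<and> (\<exists>!f. f \<in> hom C X Z))"

definition biproduct :: "('o, 'm) cat \<Rightarrow> 'o \<Rightarrow> 'o \<Rightarrow> 'o \<Rightarrow> 'm \<Rightarrow> 'm \<Rightarrow> 'm \<Rightarrow> 'm \<Rightarrow> bool" where
  "biproduct C A B S i1 i2 p1 p2 \<longleftrightarrow> S \<in> Obj C \<and>
     i1 \<in> hom C A S \<and> i2 \<in> hom C B S \<and> p1 \<in> hom C S A \<and> p2 \<in> hom C S B \<and>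
     Cmp C p1 i1 = Idt C A \<and> Cmp C p2 i2 = Idt C B \<and>
     Cmp C p2 i1 = Zer C A B \<and> Cmp C p1 i2 = Zer C B A \<and>
     Add C (Cmp C i1 p1) (Cmp C i2 p2) = Idt C S"

definition additive :: "('o, 'm) cat \<Rightarrow> bool" where
  "additive C \<longleftrightarrow> category C \<and> preadditive C \<and> (\<exists>Z. zero_object C Z) \<and>
     (\<forall>A\<in>Obj C. \<forall>B\<in>Obj C. \<exists>S i1 i2 p1 p2. biproduct C A B S i1 i2 p1 p2)"

definition iso :: "('o, 'm) cat \<Rightarrow> 'm \<Rightarrow> bool" where
  "iso C f \<longleftrightarrow> f \<in> Arr C \<and> (\<exists>g\<in>hom C (Cod C f) (Dom C f).
      Cmp C g f = Idt C (Dom C f) \<and> Cmp C f g = Idt C (Cod C f))"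

definition is_kernel :: "('o, 'm) cat \<Rightarrow> 'm \<Rightarrow> 'm \<Rightarrow> bool" where
  "is_kernel C i p \<longleftrightarrow> i \<in> Arr C \<and> p \<in> Arr C \<and> Cod C i = Dom C p \<and>
     Cmp C p i = Zer C (Dom C i) (Cod C p) \<and>
     (\<forall>X\<in>Obj C. \<forall>f\<in>hom C X (Dom C p). Cmp C p f = Zer C X (Cod C p) \<longrightarrow>
        (\<exists>!g. g \<in> hom C X (Dom C i) \<and> Cmp C i g = f))"

definition is_cokernel :: "('o, 'm) cat \<Rightarrow> 'm \<Rightarrow> 'm \<Rightarrow> bool" where
  "is_cokernel C p i \<longleftrightarrow> i \<in> Arr C \<and> p \<in> Arr C \<and> Cod C i = Dom C p \<and>
     Cmp C p i = Zer C (Dom C i) (Cod C p) \<and>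
     (\<forall>X\<in>Obj C. \<forall>f\<in>hom C (Cod C i) X. Cmp C f i = Zer C (Dom C i) X \<longrightarrow>
        (\<exists>!g. g \<in> hom C (Cod C p) X \<and> Cmp C g p = f))"

definition kernel_cokernel_pair :: "('o, 'm) cat \<Rightarrow> 'm \<Rightarrow> 'm \<Rightarrow> bool" where
  "kernel_cokernel_pair C i p \<longleftrightarrow> is_kernel C i p \<and> is_cokernel C p i"

definition is_pushout :: "('o, 'm) cat \<Rightarrow> 'm \<Rightarrow> 'm \<Rightarrow> 'o \<Rightarrow> 'm \<Rightarrow> 'm \<Rightarrow> bool" where
  "is_pushout C i f D i' f' \<longleftrightarrow> i \<in> Arr C \<and> f \<in> Arr C \<and> Dom C i = Dom C f \<and> D \<in> Obj C \<and>
     i' \<in> hom C (Cod C f) D \<and> f' \<in> hom C (Cod C i) D \<and> Cmp C f' i = Cmp C i' f \<and>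
     (\<forall>X\<in>Obj C. \<forall>x\<in>hom C (Cod C f) X. \<forall>y\<in>hom C (Cod C i) X. Cmp C y i = Cmp C x f \<longrightarrow>
        (\<exists>!h. h \<in> hom C D X \<and> Cmp C h i' = x \<and> Cmp C h f' = y))"

definition is_pullback :: "('o, 'm) cat \<Rightarrow> 'm \<Rightarrow> 'm \<Rightarrow> 'o \<Rightarrow> 'm \<Rightarrow> 'm \<Rightarrow> bool" where
  "is_pullback C p f P p' f' \<longleftrightarrow> p \<in> Arr C \<and> f \<in> Arr C \<and> Cod C p = Cod C f \<and> P \<in> Obj C \<and>
     p' \<in> hom C P (Dom C f) \<and> f' \<in> hom C P (Dom C p) \<and> Cmp C p f' = Cmp C f p' \<and>
     (\<forall>X\<in>Obj C. \<forall>x\<in>hom C X (Dom C f). \<forall>y\<in>hom C X (Dom C p). Cmp C p y = Cmp C f x \<longrightarrow>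
        (\<exists>!h. h \<in> hom C X P \<and> Cmp C p' h = x \<and> Cmp C f' h = y))"

text \<open>Conflations are pairs (i, p) (inflation i, deflation p).\<close>

definition adm_mono :: "('m \<times> 'm) set \<Rightarrow> 'm \<Rightarrow> bool" where
  "adm_mono E i \<longleftrightarrow> (\<exists>p. (i, p) \<in> E)"

definition adm_epi :: "('m \<times> 'm) set \<Rightarrow> 'm \<Rightarrow> bool" where
  "adm_epi E p \<longleftrightarrow> (\<exists>i. (i, p) \<in> E)"

definition exact_structure :: "('o, 'm) cat \<Rightarrow> ('m \<times> 'm) set \<Rightarrow> bool" where
  "exact_structure C E \<longleftrightarrow>
     (\<forall>(i, p)\<in>E. kernel_cokernel_pair C i p) \<and>
     \<comment> \<open>closed under isomorphisms of kernel-cokernel pairs\<close>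
     (\<forall>(i, p)\<in>E. \<forall>i' p' u v w. kernel_cokernel_pair C i' p' \<and>
        iso C u \<and> iso C v \<and> iso C w \<and>
        u \<in> hom C (Dom C i) (Dom C i') \<and> v \<in> hom C (Cod C i) (Cod C i') \<and>
        w \<in> hom C (Cod C p) (Cod C p') \<and>
        Cmp C v i = Cmp C i' u \<and> Cmp C w p = Cmp C p' v \<longrightarrow> (i', p') \<in> E) \<and>
     \<comment> \<open>E0, E0op\<close>
     (\<forall>A\<in>Obj C. adm_mono E (Idt C A) \<and> adm_epi E (Idt C A)) \<and>
     \<comment> \<open>E1, E1op\<close>
     (\<forall>i i'. adm_mono E i \<and> adm_mono E i' \<and> Cod C i = Dom C i' \<longrightarrow> adm_mono E (Cmp C i' i)) \<and>
     (\<forall>p p'. adm_epi E p \<and> adm_epi E p' \<and> Cod C p = Dom C p' \<longrightarrow> adm_epi E (Cmp C p' p)) \<and>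
     \<comment> \<open>E2: pushouts of inflations exist and are inflations\<close>
     (\<forall>i f. adm_mono E i \<and> f \<in> Arr C \<and> Dom C f = Dom C i \<longrightarrow>
        (\<exists>D i' f'. is_pushout C i f D i' f' \<and> adm_mono E i')) \<and>
     \<comment> \<open>E2op: pullbacks of deflations exist and are deflations\<close>
     (\<forall>p f. adm_epi E p \<and> f \<in> Arr C \<and> Cod C f = Cod C p \<longrightarrow>
        (\<exists>P p' f'. is_pullback C p f P p' f' \<and> adm_epi E p'))"

definition exact_category :: "('o, 'm) cat \<Rightarrow> ('m \<times> 'm) set \<Rightarrow> bool" where
  "exact_category C E \<longleftrightarrow> additive C \<and> exact_structure C E"

definition is_coproduct :: "('o, 'm) cat \<Rightarrow> 'j set \<Rightarrow> ('j \<Rightarrow> 'o) \<Rightarrow> 'o \<Rightarrow> ('j \<Rightarrow> 'm) \<Rightarrow> bool" where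
  "is_coproduct C J A S \<iota> \<longleftrightarrow> S \<in> Obj C \<and> (\<forall>j\<in>J. \<iota> j \<in> hom C (A j) S) \<and>
     (\<forall>X\<in>Obj C. \<forall>f. (\<forall>j\<in>J. f j \<in> hom C (A j) X) \<longrightarrow>
        (\<exists>!h. h \<in> hom C S X \<and> (\<forall>j\<in>J. Cmp C h (\<iota> j) = f j)))"

text \<open>Exact coproducts, for families indexed by subsets of the type 'j:
  coproducts exist, and coproducts of conflations are conflations.\<close>
definition has_exact_coproducts ::
    "('o, 'm) cat \<Rightarrow> ('m \<times> 'm) set \<Rightarrow> 'j itself \<Rightarrow> bool" where
  "has_exact_coproducts C E (_ :: 'j itself) \<longleftrightarrow>
     (\<forall>(J :: 'j set) A. (\<forall>j\<in>J. A j \<in> Obj C) \<longrightarrow> (\<exists>S \<iota>. is_coproduct C J A S \<iota>)) \<and>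
     (\<forall>(J :: 'j set) B X A i p SB \<iota>B SX \<iota>X SA \<iota>A u v.
        (\<forall>j\<in>J. (i j, p j) \<in> E \<and> i j \<in> hom C (B j) (X j) \<and> p j \<in> hom C (X j) (A j)) \<and>
        is_coproduct C J B SB \<iota>B \<and> is_coproduct C J X SX \<iota>X \<and> is_coproduct C J A SA \<iota>A \<and>
        u \<in> hom C SB SX \<and> (\<forall>j\<in>J. Cmp C u (\<iota>B j) = Cmp C (\<iota>X j) (i j)) \<and>
        v \<in> hom C SX SA \<and> (\<forall>j\<in>J. Cmp C v (\<iota>X j) = Cmp C (\<iota>A j) (p j))
        \<longrightarrow> (u, v) \<in> E)"

text \<open>For a : A0 \<rightarrow> A1 and b : B0 \<rightarrow> B1, Ext(a,b) : Ext(A1,B0) \<rightarrow> Ext(A0,B1) is zero iff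
  for every conflation B0 \<rightarrow> C \<rightarrow> A1, pushing out along b and then pulling back along a
  yields a split conflation (i.e. the zero element of Ext(A0,B1)).\<close>
definition Ext_zero :: "('o, 'm) cat \<Rightarrow> ('m \<times> 'm) set \<Rightarrow> 'm \<Rightarrow> 'm \<Rightarrow> bool" where
  "Ext_zero C E a b \<longleftrightarrow>
     (\<forall>i p. (i, p) \<in> E \<and> Dom C i = Dom C b \<and> Cod C p = Cod C a \<longrightarrow>
        (\<exists>D i' b' p' P p'' a' i''.
           is_pushout C i b D i' b' \<and>
           p' \<in> hom C D (Cod C a) \<and> Cmp C p' i' = Zer C (Cod C b) (Cod C a) \<and> Cmp C p' b' = p \<and>
           is_pullback C p' a P p'' a' \<and>
           i'' \<in> hom C (Cod C b) P \<and> Cmp C p'' i'' = Zer C (Cod C b) (Dom C a) \<and> Cmp C a' i'' = i' \<and>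
           (\<exists>s\<in>hom C (Dom C a) P. Cmp C p'' s = Idt C (Dom C a))))"

definition left_perp :: "('o, 'm) cat \<Rightarrow> ('m \<times> 'm) set \<Rightarrow> 'm set \<Rightarrow> 'm set" where
  "left_perp C E M = {a \<in> Arr C. \<forall>m\<in>M. Ext_zero C E a m}"

definition left_closed_ideal :: "('o, 'm) cat \<Rightarrow> ('m \<times> 'm) set \<Rightarrow> 'm set \<Rightarrow> bool" where
  "left_closed_ideal C E I \<longleftrightarrow> (\<exists>M \<subseteq> Arr C. I = left_perp C E M)"

end

theory Submission
  imports Defs
begin


locale exc =
  fixes C :: "('o, 'm) cat" and E :: "('m \<times> 'm) set"
  assumes ex: "exact_category C E"
begin

lemma cat: "category C" using ex by (simp add: exact_category_def additive_def)
lemma pre: "preadditive C" using ex by (simp add: exact_category_def additive_def)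
lemma es: "exact_structure C E" using ex by (simp add: exact_category_def)

lemma homI: "f \<in> Arr C \<Longrightarrow> Dom C f = A \<Longrightarrow> Cod C f = B \<Longrightarrow> f \<in> hom C A B"
  by (simp add: hom_def)
lemma homD: "f \<in> hom C A B \<Longrightarrow> f \<in> Arr C" "f \<in> hom C A B \<Longrightarrow> Dom C f = A"
  "f \<in> hom C A B \<Longrightarrow> Cod C f = B"
  by (simp_all add: hom_def)

lemma arr_objs: "f \<in> Arr C \<Longrightarrow> Dom C f \<in> Obj C" "f \<in> Arr C \<Longrightarrow> Cod C f \<in> Obj C"
  using cat unfolding category_def by blast+

lemma hom_objs: "f \<in> hom C A B \<Longrightarrow> A \<in> Obj C" "f \<in> hom C A B \<Longrightarrow> B \<in> Obj C"
  using arr_objs by (auto simp: hom_def)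

lemma comp_hom: "f \<in> hom C A B \<Longrightarrow> g \<in> hom C B D \<Longrightarrow> Cmp C g f \<in> hom C A D"
  using cat unfolding category_def hom_def by auto

lemma assoc: "f \<in> hom C A B \<Longrightarrow> g \<in> hom C B D \<Longrightarrow> h \<in> hom C D F \<Longrightarrow>
   Cmp C h (Cmp C g f) = Cmp C (Cmp C h g) f"
  using cat unfolding category_def hom_def by auto

lemma id_hom: "A \<in> Obj C \<Longrightarrow> Idt C A \<in> hom C A A"
  using cat unfolding category_def by auto

lemma id_l: "f \<in> hom C A B \<Longrightarrow> Cmp C (Idt C B) f = f"
  using cat unfolding category_def hom_def by auto
lemma id_r: "f \<in> hom C A B \<Longrightarrow> Cmp C f (Idt C A) = f"
  using cat unfolding category_def hom_def by auto

lemma zer_hom: "A \<in> Obj C \<Longrightarrow> B \<in> Obj C \<Longrightarrow> Zer C A B \<in> hom C A B"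
  using pre unfolding preadditive_def by auto
lemma add_hom: "f \<in> hom C A B \<Longrightarrow> g \<in> hom C A B \<Longrightarrow> Add C f g \<in> hom C A B"
  using pre hom_objs unfolding preadditive_def by metis
lemma add_assoc: "f \<in> hom C A B \<Longrightarrow> g \<in> hom C A B \<Longrightarrow> h \<in> hom C A B \<Longrightarrow>
   Add C (Add C f g) h = Add C f (Add C g h)"
  using pre hom_objs unfolding preadditive_def by metis
lemma add_zero: "f \<in> hom C A B \<Longrightarrow> Add C f (Zer C A B) = f"
  using pre hom_objs unfolding preadditive_def by metis
lemma add_inv: "f \<in> hom C A B \<Longrightarrow> \<exists>g\<in>hom C A B. Add C f g = Zer C A B"
  using pre hom_objs unfolding preadditive_def by metis
lemma comp_add_r: "f \<in> hom C A B \<Longrightarrow> f' \<in> hom C A B \<Longrightarrow> g \<in> hom C B D \<Longrightarrow>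
   Cmp C g (Add C f f') = Add C (Cmp C g f) (Cmp C g f')"
  using pre hom_objs unfolding preadditive_def by metis
lemma comp_add_l: "f \<in> hom C A B \<Longrightarrow> g \<in> hom C B D \<Longrightarrow> g' \<in> hom C B D \<Longrightarrow>
   Cmp C (Add C g g') f = Add C (Cmp C g f) (Cmp C g' f)"
  using pre hom_objs unfolding preadditive_def by metis

lemma add_self_zero:
  assumes x: "x \<in> hom C A B" and xx: "Add C x x = x" shows "x = Zer C A B"
proof -
  obtain y where y: "y \<in> hom C A B" "Add C x y = Zer C A B" using add_inv[OF x] by blast
  have "Add C (Add C x x) y = Add C x (Add C x y)" using add_assoc[OF x x y(1)] .
  then have "Add C x y = Add C x (Zer C A B)" using xx y by simp
  then show ?thesis using y add_zero[OF x] by simp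
qed

lemma zero_r: assumes g: "g \<in> hom C B D" and A: "A \<in> Obj C"
  shows "Cmp C g (Zer C A B) = Zer C A D"
proof -
  have B: "B \<in> Obj C" using hom_objs g by blast
  have z: "Zer C A B \<in> hom C A B" using zer_hom A B by blast
  have zz: "Add C (Zer C A B) (Zer C A B) = Zer C A B" using add_zero[OF z] .
  have "Cmp C g (Zer C A B) = Add C (Cmp C g (Zer C A B)) (Cmp C g (Zer C A B))"
    using comp_add_r[OF z z g] zz by simp
  then show ?thesis using add_self_zero comp_hom[OF z g] by metis
qed

lemma zero_l: assumes f: "f \<in> hom C A B" and D: "D \<in> Obj C"
  shows "Cmp C (Zer C B D) f = Zer C A D"
proof -
  have B: "B \<in> Obj C" using hom_objs f by blast
  have z: "Zer C B D \<in> hom C B D" using zer_hom D B by blast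
  have zz: "Add C (Zer C B D) (Zer C B D) = Zer C B D" using add_zero[OF z] .
  have "Cmp C (Zer C B D) f = Add C (Cmp C (Zer C B D) f) (Cmp C (Zer C B D) f)"
    using comp_add_l[OF f z z] zz by simp
  then show ?thesis using add_self_zero comp_hom[OF f z] by metis
qed

end

context exc begin

lemma ker_mono:
  assumes k: "is_kernel C i p" and h1: "h1 \<in> hom C Z (Dom C i)" and h2: "h2 \<in> hom C Z (Dom C i)"
    and eq: "Cmp C i h1 = Cmp C i h2"
  shows "h1 = h2"
proof -
  have i: "i \<in> hom C (Dom C i) (Dom C p)" and p: "p \<in> hom C (Dom C p) (Cod C p)"
    and pi: "Cmp C p i = Zer C (Dom C i) (Cod C p)"
    using k unfolding is_kernel_def hom_def by auto
  have Z: "Z \<in> Obj C" using hom_objs h1 by blast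
  have f: "Cmp C i h1 \<in> hom C Z (Dom C p)" using comp_hom[OF h1 i] .
  have "Cmp C p (Cmp C i h1) = Cmp C (Cmp C p i) h1" using assoc[OF h1 i p] .
  also have "\<dots> = Zer C Z (Cod C p)" using pi zero_l[OF h1] hom_objs(2)[OF p] by simp
  finally have "Cmp C p (Cmp C i h1) = Zer C Z (Cod C p)" .
  then have "\<exists>!g. g \<in> hom C Z (Dom C i) \<and> Cmp C i g = Cmp C i h1"
    using k Z f unfolding is_kernel_def by blast
  then show ?thesis using h1 h2 eq by metis
qed

lemma coker_epi:
  assumes k: "is_cokernel C p i" and h1: "h1 \<in> hom C (Cod C p) Z" and h2: "h2 \<in> hom C (Cod C p) Z"
    and eq: "Cmp C h1 p = Cmp C h2 p"
  shows "h1 = h2"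
proof -
  have i: "i \<in> hom C (Dom C i) (Cod C i)" and p: "p \<in> hom C (Cod C i) (Cod C p)"
    and pi: "Cmp C p i = Zer C (Dom C i) (Cod C p)"
    using k unfolding is_cokernel_def hom_def by auto
  have Z: "Z \<in> Obj C" using hom_objs h1 by blast
  have f: "Cmp C h1 p \<in> hom C (Cod C i) Z" using comp_hom[OF p h1] .
  have "Cmp C (Cmp C h1 p) i = Cmp C h1 (Cmp C p i)" using assoc[OF i p h1] by simp
  also have "\<dots> = Zer C (Dom C i) Z" using pi zero_r[OF h1] hom_objs(1)[OF i] by simp
  finally have "Cmp C (Cmp C h1 p) i = Zer C (Dom C i) Z" .
  then have "\<exists>!g. g \<in> hom C (Cod C p) Z \<and> Cmp C g p = Cmp C h1 p"
    using k Z f unfolding is_cokernel_def by blast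
  then show ?thesis using h1 h2 eq by metis
qed

lemma pushout_eq:
  assumes po: "is_pushout C i f D i' f'" and h1: "h1 \<in> hom C D Z" and h2: "h2 \<in> hom C D Z"
    and e1: "Cmp C h1 i' = Cmp C h2 i'" and e2: "Cmp C h1 f' = Cmp C h2 f'"
  shows "h1 = h2"
proof -
  have i: "i \<in> hom C (Dom C i) (Cod C i)" and f: "f \<in> hom C (Dom C i) (Cod C f)"
    and i': "i' \<in> hom C (Cod C f) D" and f': "f' \<in> hom C (Cod C i) D"
    and sq: "Cmp C f' i = Cmp C i' f"
    using po unfolding is_pushout_def hom_def by auto
  have Z: "Z \<in> Obj C" using hom_objs h1 by blast
  have x: "Cmp C h1 i' \<in> hom C (Cod C f) Z" using comp_hom[OF i' h1] .
  have y: "Cmp C h1 f' \<in> hom C (Cod C i) Z" using comp_hom[OF f' h1] .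
  have "Cmp C (Cmp C h1 f') i = Cmp C h1 (Cmp C f' i)" using assoc[OF i f' h1] by simp
  also have "\<dots> = Cmp C (Cmp C h1 i') f" using sq assoc[OF f i' h1] by simp
  finally have "Cmp C (Cmp C h1 f') i = Cmp C (Cmp C h1 i') f" .
  then have "\<exists>!h. h \<in> hom C D Z \<and> Cmp C h i' = Cmp C h1 i' \<and> Cmp C h f' = Cmp C h1 f'"
    using po Z x y unfolding is_pushout_def by blast
  then show ?thesis using h1 h2 e1 e2 by metis
qed

lemma pullback_eq:
  assumes pb: "is_pullback C p f P p' f'" and h1: "h1 \<in> hom C Z P" and h2: "h2 \<in> hom C Z P"
    and e1: "Cmp C p' h1 = Cmp C p' h2" and e2: "Cmp C f' h1 = Cmp C f' h2"
  shows "h1 = h2"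
proof -
  have p: "p \<in> hom C (Dom C p) (Cod C p)" and f: "f \<in> hom C (Dom C f) (Cod C p)"
    and p': "p' \<in> hom C P (Dom C f)" and f': "f' \<in> hom C P (Dom C p)"
    and sq: "Cmp C p f' = Cmp C f p'"
    using pb unfolding is_pullback_def hom_def by auto
  have Z: "Z \<in> Obj C" using hom_objs h1 by blast
  have x: "Cmp C p' h1 \<in> hom C Z (Dom C f)" using comp_hom[OF h1 p'] .
  have y: "Cmp C f' h1 \<in> hom C Z (Dom C p)" using comp_hom[OF h1 f'] .
  have "Cmp C p (Cmp C f' h1) = Cmp C (Cmp C p f') h1" using assoc[OF h1 f' p] .
  also have "\<dots> = Cmp C f (Cmp C p' h1)" using sq assoc[OF h1 p' f] by simp
  finally have "Cmp C p (Cmp C f' h1) = Cmp C f (Cmp C p' h1)" .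
  then have "\<exists>!h. h \<in> hom C Z P \<and> Cmp C p' h = Cmp C p' h1 \<and> Cmp C f' h = Cmp C f' h1"
    using pb Z x y unfolding is_pullback_def by blast
  then show ?thesis using h1 h2 e1 e2 by metis
qed

lemma iso_id: "A \<in> Obj C \<Longrightarrow> iso C (Idt C A)"
  unfolding iso_def using id_hom homD id_l by metis

lemma iso_closed:
  assumes "(i, p) \<in> E" "kernel_cokernel_pair C i' p'" "iso C u" "iso C v" "iso C w"
    "u \<in> hom C (Dom C i) (Dom C i')" "v \<in> hom C (Cod C i) (Cod C i')"
    "w \<in> hom C (Cod C p) (Cod C p')"
    "Cmp C v i = Cmp C i' u" "Cmp C w p = Cmp C p' v"
  shows "(i', p') \<in> E"
proof -
  have "\<forall>(i, p)\<in>E. \<forall>i' p' u v w. kernel_cokernel_pair C i' p' \<and>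
        iso C u \<and> iso C v \<and> iso C w \<and>
        u \<in> hom C (Dom C i) (Dom C i') \<and> v \<in> hom C (Cod C i) (Cod C i') \<and>
        w \<in> hom C (Cod C p) (Cod C p') \<and>
        Cmp C v i = Cmp C i' u \<and> Cmp C w p = Cmp C p' v \<longrightarrow> (i', p') \<in> E"
    using es unfolding exact_structure_def by blast
  then show ?thesis using assms by blast
qed

lemma E_kcp: "(i, p) \<in> E \<Longrightarrow> kernel_cokernel_pair C i p"
  using es unfolding exact_structure_def by blast

end

context exc begin

lemma ker_basic: "is_kernel C i p \<Longrightarrow> i \<in> Arr C \<and> p \<in> Arr C \<and> Cod C i = Dom C p \<and>
     Cmp C p i = Zer C (Dom C i) (Cod C p)"
  unfolding is_kernel_def by simp
lemma ker_univ: "is_kernel C i p \<Longrightarrow> X \<in> Obj C \<Longrightarrow> f \<in> hom C X (Dom C p) \<Longrightarrow>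
   Cmp C p f = Zer C X (Cod C p) \<Longrightarrow> \<exists>!g. g \<in> hom C X (Dom C i) \<and> Cmp C i g = f"
  unfolding is_kernel_def by blast
lemma coker_basic: "is_cokernel C p i \<Longrightarrow> i \<in> Arr C \<and> p \<in> Arr C \<and> Cod C i = Dom C p \<and>
     Cmp C p i = Zer C (Dom C i) (Cod C p)"
  unfolding is_cokernel_def by simp
lemma coker_univ: "is_cokernel C p i \<Longrightarrow> X \<in> Obj C \<Longrightarrow> f \<in> hom C (Cod C i) X \<Longrightarrow>
   Cmp C f i = Zer C (Dom C i) X \<Longrightarrow> \<exists>!g. g \<in> hom C (Cod C p) X \<and> Cmp C g p = f"
  unfolding is_cokernel_def by blast
lemma po_basic: "is_pushout C i f D i' f' \<Longrightarrow> i \<in> Arr C \<and> f \<in> Arr C \<and> Dom C i = Dom C f \<and> D \<in> Obj C \<and>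
     i' \<in> hom C (Cod C f) D \<and> f' \<in> hom C (Cod C i) D \<and> Cmp C f' i = Cmp C i' f"
  unfolding is_pushout_def by simp
lemma po_univ: "is_pushout C i f D i' f' \<Longrightarrow> X \<in> Obj C \<Longrightarrow> x \<in> hom C (Cod C f) X \<Longrightarrow>
   y \<in> hom C (Cod C i) X \<Longrightarrow> Cmp C y i = Cmp C x f \<Longrightarrow>
   \<exists>!h. h \<in> hom C D X \<and> Cmp C h i' = x \<and> Cmp C h f' = y"
  unfolding is_pushout_def by blast
lemma pb_basic: "is_pullback C p f P p' f' \<Longrightarrow> p \<in> Arr C \<and> f \<in> Arr C \<and> Cod C p = Cod C f \<and> P \<in> Obj C \<and>
     p' \<in> hom C P (Dom C f) \<and> f' \<in> hom C P (Dom C p) \<and> Cmp C p f' = Cmp C f p'"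
  unfolding is_pullback_def by simp
lemma pb_univ: "is_pullback C p f P p' f' \<Longrightarrow> X \<in> Obj C \<Longrightarrow> x \<in> hom C X (Dom C f) \<Longrightarrow>
   y \<in> hom C X (Dom C p) \<Longrightarrow> Cmp C p y = Cmp C f x \<Longrightarrow>
   \<exists>!h. h \<in> hom C X P \<and> Cmp C p' h = x \<and> Cmp C f' h = y"
  unfolding is_pullback_def by blast

end

context exc begin

lemma ker_E:
  assumes kE: "(k, p) \<in> E" and ik: "is_kernel C i p"
  shows "(i, p) \<in> E"
proof -
  define K where "K = Dom C k"
  define K' where "K' = Dom C i"
  define Y where "Y = Dom C p"
  define Z where "Z = Cod C p"
  have kk: "is_kernel C k p" and kc: "is_cokernel C p k" using E_kcp[OF kE]
    unfolding kernel_cokernel_pair_def by auto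
  have k: "k \<in> hom C K Y" and pk: "Cmp C p k = Zer C K Z"
    using ker_basic[OF kk] unfolding hom_def K_def Y_def Z_def by auto
  have i: "i \<in> hom C K' Y" and pi: "Cmp C p i = Zer C K' Z"
    using ker_basic[OF ik] unfolding hom_def K'_def Y_def Z_def by auto
  have p: "p \<in> hom C Y Z" using ker_basic[OF kk] unfolding hom_def Y_def Z_def by auto
  have Kobj: "K \<in> Obj C" "K' \<in> Obj C" "Y \<in> Obj C" "Z \<in> Obj C"
    using hom_objs k i p by auto
  have "\<exists>!g. g \<in> hom C K K' \<and> Cmp C i g = k"
    using ker_univ[OF ik Kobj(1), of k] k pk unfolding K'_def Y_def Z_def by simp
  then obtain \<phi> where phi: "\<phi> \<in> hom C K K'" "Cmp C i \<phi> = k" by blast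
  have "\<exists>!g. g \<in> hom C K' K \<and> Cmp C k g = i"
    using ker_univ[OF kk Kobj(2), of i] i pi unfolding K_def Y_def Z_def by simp
  then obtain \<psi> where psi: "\<psi> \<in> hom C K' K" "Cmp C k \<psi> = i" by blast
  have "Cmp C k (Cmp C \<psi> \<phi>) = Cmp C k (Idt C K)"
    using assoc[OF phi(1) psi(1) k] psi(2) phi(2) id_r[OF k] by simp
  then have pp1: "Cmp C \<psi> \<phi> = Idt C K"
    using ker_mono[OF kk, of "Cmp C \<psi> \<phi>" K "Idt C K"] comp_hom[OF phi(1) psi(1)] id_hom[OF Kobj(1)] unfolding K_def by simp
  have "Cmp C i (Cmp C \<phi> \<psi>) = Cmp C i (Idt C K')"
    using assoc[OF psi(1) phi(1) i] psi(2) phi(2) id_r[OF i] by simp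
  then have pp2: "Cmp C \<phi> \<psi> = Idt C K'"
    using ker_mono[OF ik, of "Cmp C \<phi> \<psi>" K' "Idt C K'"] comp_hom[OF psi(1) phi(1)] id_hom[OF Kobj(2)] unfolding K'_def by simp
  have isophi: "iso C \<phi>" unfolding iso_def using homD[OF phi(1)] psi(1) pp1 pp2 by auto
  have ic: "is_cokernel C p i"
    unfolding is_cokernel_def
  proof (intro conjI ballI impI)
    show "i \<in> Arr C" "p \<in> Arr C" using homD(1)[OF i] homD(1)[OF p] by auto
    show "Cod C i = Dom C p" using homD(3)[OF i] homD(2)[OF p] by simp
    show "Cmp C p i = Zer C (Dom C i) (Cod C p)" using pi K'_def Z_def by simp
  next
    fix X f assume X: "X \<in> Obj C" and f: "f \<in> hom C (Cod C i) X"
      and fi: "Cmp C f i = Zer C (Dom C i) X"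
    have f': "f \<in> hom C Y X" using f homD(3)[OF i] by simp
    have "Cmp C f k = Cmp C (Cmp C f i) \<phi>" using assoc[OF phi(1) i f'] phi(2) by simp
    also have "\<dots> = Zer C K X" using fi zero_l[OF phi(1) X] K'_def by simp
    finally have "Cmp C f k = Zer C (Dom C k) X" using K_def by simp
    moreover have "f \<in> hom C (Cod C k) X" using f' homD(3)[OF k] by simp
    ultimately show "\<exists>!g. g \<in> hom C (Cod C p) X \<and> Cmp C g p = f"
      using coker_univ[OF kc X] by blast
  qed
  have kcp: "kernel_cokernel_pair C i p" unfolding kernel_cokernel_pair_def using ik ic by simp
  show ?thesis
  proof (rule iso_closed[OF kE kcp isophi iso_id[OF Kobj(3)] iso_id[OF Kobj(4)]])
    show "\<phi> \<in> hom C (Dom C k) (Dom C i)" using phi(1) K_def K'_def by simp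
    show "Idt C Y \<in> hom C (Cod C k) (Cod C i)" using id_hom[OF Kobj(3)] homD(3)[OF k] homD(3)[OF i] by simp
    show "Idt C Z \<in> hom C (Cod C p) (Cod C p)" using id_hom[OF Kobj(4)] Z_def by simp
    show "Cmp C (Idt C Y) k = Cmp C i \<phi>" using id_l[OF k] phi(2) by simp
    show "Cmp C (Idt C Z) p = Cmp C p (Idt C Y)" using id_l[OF p] id_r[OF p] by simp
  qed
qed

lemma coker_E:
  assumes qE: "(i, q) \<in> E" and pc: "is_cokernel C p i"
  shows "(i, p) \<in> E"
proof -
  define B where "B = Dom C i"
  define Y where "Y = Cod C i"
  define Q where "Q = Cod C q"
  define Z where "Z = Cod C p"
  have ik: "is_kernel C i q" and qc: "is_cokernel C q i" using E_kcp[OF qE]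
    unfolding kernel_cokernel_pair_def by auto
  have q: "q \<in> hom C Y Q" and qi: "Cmp C q i = Zer C B Q"
    using coker_basic[OF qc] unfolding hom_def B_def Y_def Q_def by auto
  have p: "p \<in> hom C Y Z" and pi: "Cmp C p i = Zer C B Z"
    using coker_basic[OF pc] unfolding hom_def B_def Y_def Z_def by auto
  have i: "i \<in> hom C B Y" using coker_basic[OF qc] unfolding hom_def B_def Y_def by auto
  have Obj: "B \<in> Obj C" "Y \<in> Obj C" "Q \<in> Obj C" "Z \<in> Obj C"
    using hom_objs q p i by auto
  have "\<exists>!g. g \<in> hom C Q Z \<and> Cmp C g q = p"
    using coker_univ[OF qc Obj(4), of p] p pi unfolding B_def Y_def Q_def by simp
  then obtain w where w: "w \<in> hom C Q Z" "Cmp C w q = p" by blast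
  have "\<exists>!g. g \<in> hom C Z Q \<and> Cmp C g p = q"
    using coker_univ[OF pc Obj(3), of q] q qi unfolding B_def Y_def Z_def by simp
  then obtain w' where w': "w' \<in> hom C Z Q" "Cmp C w' p = q" by blast
  have "Cmp C (Cmp C w' w) q = Cmp C (Idt C Q) q"
    using assoc[OF q w(1) w'(1)] w(2) w'(2) id_l[OF q] by simp
  then have ww1: "Cmp C w' w = Idt C Q"
    using coker_epi[OF qc, of "Cmp C w' w" Q "Idt C Q"] comp_hom[OF w(1) w'(1)] id_hom[OF Obj(3)] unfolding Q_def by simp
  have "Cmp C (Cmp C w w') p = Cmp C (Idt C Z) p"
    using assoc[OF p w'(1) w(1)] w(2) w'(2) id_l[OF p] by simp
  then have ww2: "Cmp C w w' = Idt C Z"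
    using coker_epi[OF pc, of "Cmp C w w'" Z "Idt C Z"] comp_hom[OF w'(1) w(1)] id_hom[OF Obj(4)] unfolding Z_def by simp
  have isow: "iso C w" unfolding iso_def using homD[OF w(1)] w'(1) ww1 ww2 by auto
  have ik2: "is_kernel C i p"
    unfolding is_kernel_def
  proof (intro conjI ballI impI)
    show "i \<in> Arr C" "p \<in> Arr C" using homD(1)[OF i] homD(1)[OF p] by auto
    show "Cod C i = Dom C p" using homD(3)[OF i] homD(2)[OF p] by simp
    show "Cmp C p i = Zer C (Dom C i) (Cod C p)" using pi B_def Z_def by simp
  next
    fix X f assume X: "X \<in> Obj C" and f: "f \<in> hom C X (Dom C p)"
      and pf: "Cmp C p f = Zer C X (Cod C p)"
    have f': "f \<in> hom C X Y" using f homD(2)[OF p] by simp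
    have "Cmp C q f = Cmp C w' (Cmp C p f)" using assoc[OF f' p w'(1)] w'(2) by simp
    also have "\<dots> = Zer C X Q" using pf zero_r[OF w'(1) X] Z_def by simp
    finally have "Cmp C q f = Zer C X (Cod C q)" using Q_def by simp
    moreover have "f \<in> hom C X (Dom C q)" using f' homD(2)[OF q] by simp
    ultimately show "\<exists>!g. g \<in> hom C X (Dom C i) \<and> Cmp C i g = f"
      using ker_univ[OF ik X] by blast
  qed
  have kcp: "kernel_cokernel_pair C i p" unfolding kernel_cokernel_pair_def using ik2 pc by simp
  show ?thesis
  proof (rule iso_closed[OF qE kcp iso_id[OF Obj(1)] iso_id[OF Obj(2)] isow])
    show "Idt C B \<in> hom C (Dom C i) (Dom C i)" using id_hom[OF Obj(1)] B_def by simp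
    show "Idt C Y \<in> hom C (Cod C i) (Cod C i)" using id_hom[OF Obj(2)] Y_def by simp
    show "w \<in> hom C (Cod C q) (Cod C p)" using w(1) Q_def Z_def by simp
    show "Cmp C (Idt C Y) i = Cmp C i (Idt C B)" using id_l[OF i] id_r[OF i] by simp
    show "Cmp C w q = Cmp C p (Idt C Y)" using id_r[OF p] w(2) by simp
  qed
qed

end

context exc begin

lemma e2: assumes "adm_mono E i" "f \<in> Arr C" "Dom C f = Dom C i"
  shows "\<exists>D i' f'. is_pushout C i f D i' f' \<and> adm_mono E i'"
proof -
  have "\<forall>i f. adm_mono E i \<and> f \<in> Arr C \<and> Dom C f = Dom C i \<longrightarrow>
        (\<exists>D i' f'. is_pushout C i f D i' f' \<and> adm_mono E i')"
    using es unfolding exact_structure_def by (elim conjE) assumption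
  then show ?thesis using assms by blast
qed
lemma e2op: assumes "adm_epi E p" "f \<in> Arr C" "Cod C f = Cod C p"
  shows "\<exists>P p' f'. is_pullback C p f P p' f' \<and> adm_epi E p'"
proof -
  have "\<forall>p f. adm_epi E p \<and> f \<in> Arr C \<and> Cod C f = Cod C p \<longrightarrow>
        (\<exists>P p' f'. is_pullback C p f P p' f' \<and> adm_epi E p')"
    using es unfolding exact_structure_def by (elim conjE) assumption
  then show ?thesis using assms by blast
qed

lemma piece:
  assumes iE: "(i, p) \<in> E" and i: "i \<in> hom C B0 X" and p: "p \<in> hom C X S1"
    and m: "m \<in> hom C B0 B1"
    and po: "is_pushout C i m D i' b'" and p': "p' \<in> hom C D S1"
    and p'i': "Cmp C p' i' = Zer C B1 S1" and p'b': "Cmp C p' b' = p"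
    and pb: "is_pullback C p' u P p'' a'" and u: "u \<in> hom C S0 S1"
    and aj: "aj \<in> hom C A0 A1" and i0: "\<iota>0 \<in> hom C A0 S0" and i1: "\<iota>1 \<in> hom C A1 S1"
    and sq: "Cmp C u \<iota>0 = Cmp C \<iota>1 aj"
    and ext: "Ext_zero C E aj m"
  shows "\<exists>e\<in>hom C A0 P. Cmp C p'' e = \<iota>0"
proof -
  have iker: "is_kernel C i p" using E_kcp[OF iE] unfolding kernel_cokernel_pair_def by simp
  have pi: "Cmp C p i = Zer C B0 S1" using ker_basic[OF iker] homD(2)[OF i] homD(3)[OF p] by simp
  have i': "i' \<in> hom C B1 D" and b': "b' \<in> hom C X D" and b'i: "Cmp C b' i = Cmp C i' m"
    using po_basic[OF po] homD(3)[OF m] homD(3)[OF i] by auto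
  have p'': "p'' \<in> hom C P S0" and a': "a' \<in> hom C P D" and p'a': "Cmp C p' a' = Cmp C u p''"
    using pb_basic[OF pb] homD(2)[OF u] homD(2)[OF p'] by auto
  have Ob: "B0 \<in> Obj C" "B1 \<in> Obj C" "X \<in> Obj C" "S1 \<in> Obj C" "S0 \<in> Obj C" "A0 \<in> Obj C"
    "A1 \<in> Obj C" "D \<in> Obj C"
    using hom_objs(1)[OF i] hom_objs(2)[OF m] hom_objs(1)[OF p] hom_objs(2)[OF p]
      hom_objs(1)[OF u] hom_objs(1)[OF aj] hom_objs(2)[OF aj] hom_objs(1)[OF p'] by auto
  have "adm_epi E p" unfolding adm_epi_def using iE by blast
  then obtain Y pj fj where pbj: "is_pullback C p \<iota>1 Y pj fj" and pjE: "adm_epi E pj"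
    using e2op[of p \<iota>1] homD(1,3)[OF i1] homD(3)[OF p] by auto
  have pj: "pj \<in> hom C Y A1" and fj: "fj \<in> hom C Y X" and pfj: "Cmp C p fj = Cmp C \<iota>1 pj"
    and Yo: "Y \<in> Obj C"
    using pb_basic[OF pbj] homD(2)[OF i1] homD(2)[OF p] by auto
  have "\<exists>!h. h \<in> hom C B0 Y \<and> Cmp C pj h = Zer C B0 A1 \<and> Cmp C fj h = i"
  proof (rule pb_univ[OF pbj Ob(1)])
    show "Zer C B0 A1 \<in> hom C B0 (Dom C \<iota>1)" using zer_hom Ob homD(2)[OF i1] by simp
    show "i \<in> hom C B0 (Dom C p)" using i homD(2)[OF p] by simp
    show "Cmp C p i = Cmp C \<iota>1 (Zer C B0 A1)" using pi zero_r[OF i1 Ob(1)] by simp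
  qed
  then obtain ij where ij: "ij \<in> hom C B0 Y" and pjij: "Cmp C pj ij = Zer C B0 A1"
    and fjij: "Cmp C fj ij = i" by blast
  have ijker: "is_kernel C ij pj"
    unfolding is_kernel_def
  proof (intro conjI ballI impI)
    show "ij \<in> Arr C" "pj \<in> Arr C" using homD(1)[OF ij] homD(1)[OF pj] by auto
    show "Cod C ij = Dom C pj" using homD(3)[OF ij] homD(2)[OF pj] by simp
    show "Cmp C pj ij = Zer C (Dom C ij) (Cod C pj)" using pjij homD(2)[OF ij] homD(3)[OF pj] by simp
  next
    fix Z g assume Z: "Z \<in> Obj C" and g0: "g \<in> hom C Z (Dom C pj)"
      and pjg0: "Cmp C pj g = Zer C Z (Cod C pj)"
    have g: "g \<in> hom C Z Y" using g0 homD(2)[OF pj] by simp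
    have pjg: "Cmp C pj g = Zer C Z A1" using pjg0 homD(3)[OF pj] by simp
    have fg: "Cmp C fj g \<in> hom C Z X" using comp_hom[OF g fj] .
    have "Cmp C p (Cmp C fj g) = Cmp C (Cmp C p fj) g" using assoc[OF g fj p] .
    also have "\<dots> = Cmp C \<iota>1 (Cmp C pj g)" using pfj assoc[OF g pj i1] by simp
    also have "\<dots> = Zer C Z S1" using pjg zero_r[OF i1 Z] by simp
    finally have pfg: "Cmp C p (Cmp C fj g) = Zer C Z (Cod C p)" using homD(3)[OF p] by simp
    have "\<exists>!h. h \<in> hom C Z (Dom C i) \<and> Cmp C i h = Cmp C fj g"
      using ker_univ[OF iker Z _ pfg] fg homD(2)[OF p] by simp
    then obtain h where h: "h \<in> hom C Z B0" and ih: "Cmp C i h = Cmp C fj g"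
      using homD(2)[OF i] by auto
    show "\<exists>!h. h \<in> hom C Z (Dom C ij) \<and> Cmp C ij h = g"
    proof (rule ex1I[of _ h])
      have ijh: "Cmp C ij h \<in> hom C Z Y" using comp_hom[OF h ij] .
      have e1: "Cmp C pj (Cmp C ij h) = Cmp C pj g"
        using assoc[OF h ij pj] pjij zero_l[OF h Ob(7)] pjg by simp
      have e2: "Cmp C fj (Cmp C ij h) = Cmp C fj g"
        using assoc[OF h ij fj] fjij ih by simp
      have "Cmp C ij h = g" using pullback_eq[OF pbj ijh g e1 e2] .
      then show "h \<in> hom C Z (Dom C ij) \<and> Cmp C ij h = g" using h homD(2)[OF ij] by simp
    next
      fix h2 assume h2: "h2 \<in> hom C Z (Dom C ij) \<and> Cmp C ij h2 = g"
      have h2h: "h2 \<in> hom C Z B0" using h2 homD(2)[OF ij] by simp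
      have "Cmp C i h2 = Cmp C i h"
        using assoc[OF h2h ij fj] fjij h2 ih by simp
      then show "h2 = h" using ker_mono[OF iker, of h2 Z h] h2h h homD(2)[OF i] by simp
    qed
  qed
  obtain k where "(k, pj) \<in> E" using pjE unfolding adm_epi_def by blast
  then have ijE: "(ij, pj) \<in> E" using ker_E ijker by blast
  have "\<exists>D i' b' p' P p'' a' i''.
           is_pushout C ij m D i' b' \<and>
           p' \<in> hom C D (Cod C aj) \<and> Cmp C p' i' = Zer C (Cod C m) (Cod C aj) \<and> Cmp C p' b' = pj \<and>
           is_pullback C p' aj P p'' a' \<and>
           i'' \<in> hom C (Cod C m) P \<and> Cmp C p'' i'' = Zer C (Cod C m) (Dom C aj) \<and> Cmp C a' i'' = i' \<and>
           (\<exists>s\<in>hom C (Dom C aj) P. Cmp C p'' s = Idt C (Dom C aj))"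
    using ext ijE homD(2)[OF ij] homD(2)[OF m] homD(3)[OF pj] homD(3)[OF aj]
    unfolding Ext_zero_def by simp
  then obtain Dj i'j b'j p'j Pj p''j a'j i''j where
    poj: "is_pushout C ij m Dj i'j b'j" and p'j0: "p'j \<in> hom C Dj (Cod C aj)"
    and p'ji'j0: "Cmp C p'j i'j = Zer C (Cod C m) (Cod C aj)" and p'jb'j: "Cmp C p'j b'j = pj"
    and pbj2: "is_pullback C p'j aj Pj p''j a'j"
    and ex_s: "\<exists>s\<in>hom C (Dom C aj) Pj. Cmp C p''j s = Idt C (Dom C aj)"
    by blast
  obtain sj where sj: "sj \<in> hom C A0 Pj" and sjs: "Cmp C p''j sj = Idt C A0"
    using ex_s homD(2)[OF aj] by auto
  have p'j: "p'j \<in> hom C Dj A1" using p'j0 homD(3)[OF aj] by simp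
  have p'ji'j: "Cmp C p'j i'j = Zer C B1 A1" using p'ji'j0 homD(3)[OF aj] homD(3)[OF m] by simp
  have i'j: "i'j \<in> hom C B1 Dj" and b'j: "b'j \<in> hom C Y Dj" and Djo: "Dj \<in> Obj C"
    using po_basic[OF poj] homD(3)[OF m] homD(3)[OF ij] by auto
  have p''j: "p''j \<in> hom C Pj A0" and a'j: "a'j \<in> hom C Pj Dj"
    and p'ja'j: "Cmp C p'j a'j = Cmp C aj p''j" and Pjo: "Pj \<in> Obj C"
    using pb_basic[OF pbj2] homD(2)[OF aj] homD(2)[OF p'j] by auto
  have bf: "Cmp C b' fj \<in> hom C Y D" using comp_hom[OF fj b'] .
  have "\<exists>!h. h \<in> hom C Dj D \<and> Cmp C h i'j = i' \<and> Cmp C h b'j = Cmp C b' fj"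
  proof (rule po_univ[OF poj Ob(8)])
    show "i' \<in> hom C (Cod C m) D" using i' homD(3)[OF m] by simp
    show "Cmp C b' fj \<in> hom C (Cod C ij) D" using bf homD(3)[OF ij] by simp
    show "Cmp C (Cmp C b' fj) ij = Cmp C i' m" using assoc[OF ij fj b'] fjij b'i by simp
  qed
  then obtain dj where dj: "dj \<in> hom C Dj D" and dji: "Cmp C dj i'j = i'"
    and djb: "Cmp C dj b'j = Cmp C b' fj" by blast
  have pdj: "Cmp C p' dj = Cmp C \<iota>1 p'j"
  proof (rule pushout_eq[OF poj comp_hom[OF dj p'] comp_hom[OF p'j i1]])
    show "Cmp C (Cmp C p' dj) i'j = Cmp C (Cmp C \<iota>1 p'j) i'j"
      using assoc[OF i'j dj p'] assoc[OF i'j p'j i1] dji p'i' p'ji'j zero_r[OF i1 Ob(2)] by simp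
    have "Cmp C (Cmp C p' dj) b'j = Cmp C p' (Cmp C b' fj)" using assoc[OF b'j dj p'] djb by simp
    also have "\<dots> = Cmp C \<iota>1 pj" using assoc[OF fj b' p'] p'b' pfj by simp
    also have "\<dots> = Cmp C (Cmp C \<iota>1 p'j) b'j" using assoc[OF b'j p'j i1] p'jb'j by simp
    finally show "Cmp C (Cmp C p' dj) b'j = Cmp C (Cmp C \<iota>1 p'j) b'j" .
  qed
  have x8: "Cmp C \<iota>0 p''j \<in> hom C Pj S0" using comp_hom[OF p''j i0] .
  have y8: "Cmp C dj a'j \<in> hom C Pj D" using comp_hom[OF a'j dj] .
  have "Cmp C p' (Cmp C dj a'j) = Cmp C (Cmp C p' dj) a'j" using assoc[OF a'j dj p'] .
  also have "\<dots> = Cmp C \<iota>1 (Cmp C p'j a'j)" using pdj assoc[OF a'j p'j i1] by simp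
  also have "\<dots> = Cmp C (Cmp C \<iota>1 aj) p''j" using p'ja'j assoc[OF p''j aj i1] by simp
  also have "\<dots> = Cmp C u (Cmp C \<iota>0 p''j)" using sq assoc[OF p''j i0 u] by simp
  finally have sq8: "Cmp C p' (Cmp C dj a'j) = Cmp C u (Cmp C \<iota>0 p''j)" .
  have "\<exists>!h. h \<in> hom C Pj P \<and> Cmp C p'' h = Cmp C \<iota>0 p''j \<and> Cmp C a' h = Cmp C dj a'j"
    using pb_univ[OF pb Pjo _ _ sq8] x8 y8 homD(2)[OF u] homD(2)[OF p'] by simp
  then obtain ej where ej: "ej \<in> hom C Pj P" and p''ej: "Cmp C p'' ej = Cmp C \<iota>0 p''j" by blast
  have "Cmp C p'' (Cmp C ej sj) = Cmp C (Cmp C \<iota>0 p''j) sj" using assoc[OF sj ej p''] p''ej by simp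
  also have "\<dots> = \<iota>0" using assoc[OF sj p''j i0] sjs id_r[OF i0] by simp
  finally show ?thesis using comp_hom[OF sj ej] by blast
qed

end

context exc begin

lemma cop_basic: "is_coproduct C J A S \<iota> \<Longrightarrow> S \<in> Obj C \<and> (\<forall>j\<in>J. \<iota> j \<in> hom C (A j) S)"
  unfolding is_coproduct_def by simp
lemma cop_univ: "is_coproduct C J A S \<iota> \<Longrightarrow> X \<in> Obj C \<Longrightarrow> (\<forall>j\<in>J. f j \<in> hom C (A j) X) \<Longrightarrow>
        (\<exists>!h. h \<in> hom C S X \<and> (\<forall>j\<in>J. Cmp C h (\<iota> j) = f j))"
  unfolding is_coproduct_def by blast

lemma main_ext:
  assumes cp0: "is_coproduct C J A0 S0 \<iota>0" and cp1: "is_coproduct C J A1 S1 \<iota>1"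
    and u: "u \<in> hom C S0 S1" and a: "\<forall>j\<in>J. a j \<in> hom C (A0 j) (A1 j)"
    and sq: "\<forall>j\<in>J. Cmp C u (\<iota>0 j) = Cmp C (\<iota>1 j) (a j)"
    and mA: "m \<in> Arr C" and ext: "\<forall>j\<in>J. Ext_zero C E (a j) m"
  shows "Ext_zero C E u m"
  unfolding Ext_zero_def
proof (intro allI impI)
  fix i p assume H: "(i, p) \<in> E \<and> Dom C i = Dom C m \<and> Cod C p = Cod C u"
  have iE: "(i, p) \<in> E" using H by simp
  define B0 where "B0 = Dom C m"
  define B1 where "B1 = Cod C m"
  define X where "X = Cod C i"
  have m: "m \<in> hom C B0 B1" by (rule homI) (simp_all add: mA B0_def B1_def)
  have iker: "is_kernel C i p" and icok: "is_cokernel C p i"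
    using E_kcp[OF iE] unfolding kernel_cokernel_pair_def by simp_all
  have ib: "i \<in> Arr C \<and> p \<in> Arr C \<and> Cod C i = Dom C p \<and> Cmp C p i = Zer C (Dom C i) (Cod C p)"
    using ker_basic[OF iker] .
  have i: "i \<in> hom C B0 X" by (rule homI) (use ib H in \<open>simp_all add: B0_def X_def\<close>)
  have p: "p \<in> hom C X S1" by (rule homI) (use ib H homD(3)[OF u] in \<open>simp_all add: X_def\<close>)
  have pi: "Cmp C p i = Zer C B0 S1" using ib H B0_def homD(3)[OF u] by simp
  have Ob: "B0 \<in> Obj C" "B1 \<in> Obj C" "X \<in> Obj C" "S1 \<in> Obj C" "S0 \<in> Obj C"
    using hom_objs(1)[OF m] hom_objs(2)[OF m] hom_objs(2)[OF i] hom_objs(2)[OF p] hom_objs(1)[OF u]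
    by auto
  have "adm_mono E i" unfolding adm_mono_def using iE by blast
  then obtain D i' b' where po: "is_pushout C i m D i' b'" and i'm: "adm_mono E i'"
    using e2[of i m] mA H by auto
  have i': "i' \<in> hom C B1 D" and b': "b' \<in> hom C X D" and b'i: "Cmp C b' i = Cmp C i' m"
    and Do: "D \<in> Obj C"
    using po_basic[OF po] B1_def X_def by auto
  have "\<exists>!h. h \<in> hom C D S1 \<and> Cmp C h i' = Zer C B1 S1 \<and> Cmp C h b' = p"
  proof (rule po_univ[OF po Ob(4)])
    show "Zer C B1 S1 \<in> hom C (Cod C m) S1" using zer_hom Ob B1_def by simp
    show "p \<in> hom C (Cod C i) S1" using p X_def by simp
    show "Cmp C p i = Cmp C (Zer C B1 S1) m" using pi zero_l[OF m Ob(4)] by simp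
  qed
  then obtain p' where p': "p' \<in> hom C D S1" and p'i': "Cmp C p' i' = Zer C B1 S1"
    and p'b': "Cmp C p' b' = p" by blast
  have p'cok: "is_cokernel C p' i'"
    unfolding is_cokernel_def
  proof (intro conjI ballI impI)
    show "i' \<in> Arr C" "p' \<in> Arr C" using homD(1)[OF i'] homD(1)[OF p'] by auto
    show "Cod C i' = Dom C p'" using homD(3)[OF i'] homD(2)[OF p'] by simp
    show "Cmp C p' i' = Zer C (Dom C i') (Cod C p')" using p'i' homD(2)[OF i'] homD(3)[OF p'] by simp
  next
    fix Z x assume Z: "Z \<in> Obj C" and x0: "x \<in> hom C (Cod C i') Z"
      and xi0: "Cmp C x i' = Zer C (Dom C i') Z"
    have x: "x \<in> hom C D Z" using x0 homD(3)[OF i'] by simp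
    have xi: "Cmp C x i' = Zer C B1 Z" using xi0 homD(2)[OF i'] by simp
    have xb: "Cmp C x b' \<in> hom C X Z" using comp_hom[OF b' x] .
    have "Cmp C (Cmp C x b') i = Cmp C x (Cmp C b' i)" using assoc[OF i b' x] by simp
    also have "\<dots> = Cmp C (Cmp C x i') m" using b'i assoc[OF m i' x] by simp
    also have "\<dots> = Zer C B0 Z" using xi zero_l[OF m Z] by simp
    finally have "Cmp C (Cmp C x b') i = Zer C (Dom C i) Z" using homD(2)[OF i] by simp
    then have "\<exists>!g. g \<in> hom C (Cod C p) Z \<and> Cmp C g p = Cmp C x b'"
      using coker_univ[OF icok Z] xb homD(3)[OF i] by simp
    then obtain g where g: "g \<in> hom C S1 Z" and gp: "Cmp C g p = Cmp C x b'"
      using homD(3)[OF p] by auto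
    show "\<exists>!g. g \<in> hom C (Cod C p') Z \<and> Cmp C g p' = x"
    proof (rule ex1I[of _ g])
      have e1: "Cmp C (Cmp C g p') i' = Cmp C x i'"
        using assoc[OF i' p' g] p'i' zero_r[OF g Ob(2)] xi by simp
      have e2: "Cmp C (Cmp C g p') b' = Cmp C x b'"
        using assoc[OF b' p' g] p'b' gp by simp
      have "Cmp C g p' = x" using pushout_eq[OF po comp_hom[OF p' g] x e1 e2] .
      then show "g \<in> hom C (Cod C p') Z \<and> Cmp C g p' = x" using g homD(3)[OF p'] by simp
    next
      fix g2 assume g2: "g2 \<in> hom C (Cod C p') Z \<and> Cmp C g2 p' = x"
      have g2h: "g2 \<in> hom C S1 Z" using g2 homD(3)[OF p'] by simp
      have "Cmp C g2 p = Cmp C g p" using assoc[OF b' p' g2h] p'b' g2 gp by simp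
      then show "g2 = g" using coker_epi[OF icok, of g2 Z g] g2h g homD(3)[OF p] by simp
    qed
  qed
  obtain q where "(i', q) \<in> E" using i'm unfolding adm_mono_def by blast
  then have i'p'E: "(i', p') \<in> E" using coker_E p'cok by blast
  then have "adm_epi E p'" unfolding adm_epi_def by blast
  then obtain P p'' a' where pb: "is_pullback C p' u P p'' a'"
    using e2op[of p' u] homD(1,3)[OF u] homD(3)[OF p'] by auto
  have p'': "p'' \<in> hom C P S0" and a': "a' \<in> hom C P D" and p'a': "Cmp C p' a' = Cmp C u p''"
    and Po: "P \<in> Obj C"
    using pb_basic[OF pb] homD(2)[OF u] homD(2)[OF p'] by auto
  have "\<exists>!h. h \<in> hom C B1 P \<and> Cmp C p'' h = Zer C B1 S0 \<and> Cmp C a' h = i'"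
  proof (rule pb_univ[OF pb Ob(2)])
    show "Zer C B1 S0 \<in> hom C B1 (Dom C u)" using zer_hom Ob homD(2)[OF u] by simp
    show "i' \<in> hom C B1 (Dom C p')" using i' homD(2)[OF p'] by simp
    show "Cmp C p' i' = Cmp C u (Zer C B1 S0)" using p'i' zero_r[OF u Ob(2)] by simp
  qed
  then obtain i'' where i'': "i'' \<in> hom C B1 P" and p''i'': "Cmp C p'' i'' = Zer C B1 S0"
    and a'i'': "Cmp C a' i'' = i'" by blast
  have cb0: "\<forall>j\<in>J. \<iota>0 j \<in> hom C (A0 j) S0" using cop_basic[OF cp0] by simp
  have cb1: "\<forall>j\<in>J. \<iota>1 j \<in> hom C (A1 j) S1" using cop_basic[OF cp1] by simp
  have "\<forall>j\<in>J. \<exists>e\<in>hom C (A0 j) P. Cmp C p'' e = \<iota>0 j"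
  proof
    fix j assume j: "j \<in> J"
    show "\<exists>e\<in>hom C (A0 j) P. Cmp C p'' e = \<iota>0 j"
      by (rule piece[OF iE i p m po p' p'i' p'b' pb u])
        (use j a cb0 cb1 sq ext in auto)
  qed
  then obtain e where e: "\<forall>j\<in>J. e j \<in> hom C (A0 j) P \<and> Cmp C p'' (e j) = \<iota>0 j"
    by metis
  have "\<exists>!h. h \<in> hom C S0 P \<and> (\<forall>j\<in>J. Cmp C h (\<iota>0 j) = e j)"
    using cop_univ[OF cp0 Po] e by blast
  then obtain s where s: "s \<in> hom C S0 P" and se: "\<forall>j\<in>J. Cmp C s (\<iota>0 j) = e j" by blast
  have u1: "\<exists>!h. h \<in> hom C S0 S0 \<and> (\<forall>j\<in>J. Cmp C h (\<iota>0 j) = \<iota>0 j)"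
    using cop_univ[OF cp0 Ob(5), of \<iota>0] cb0 by blast
  have h1: "Cmp C p'' s \<in> hom C S0 S0 \<and> (\<forall>j\<in>J. Cmp C (Cmp C p'' s) (\<iota>0 j) = \<iota>0 j)"
  proof (intro conjI ballI)
    show "Cmp C p'' s \<in> hom C S0 S0" using comp_hom[OF s p''] .
    fix j assume j: "j \<in> J"
    have "Cmp C (Cmp C p'' s) (\<iota>0 j) = Cmp C p'' (Cmp C s (\<iota>0 j))"
      using assoc[OF _ s p'', of "\<iota>0 j" "A0 j"] cb0 j by simp
    then show "Cmp C (Cmp C p'' s) (\<iota>0 j) = \<iota>0 j" using se e j by simp
  qed
  have h2: "Idt C S0 \<in> hom C S0 S0 \<and> (\<forall>j\<in>J. Cmp C (Idt C S0) (\<iota>0 j) = \<iota>0 j)"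
    using id_hom[OF Ob(5)] id_l cb0 by blast
  have ps: "Cmp C p'' s = Idt C S0" using u1 h1 h2 by blast
  have fin: "is_pushout C i m D i' b' \<and>
           p' \<in> hom C D (Cod C u) \<and> Cmp C p' i' = Zer C (Cod C m) (Cod C u) \<and> Cmp C p' b' = p \<and>
           is_pullback C p' u P p'' a' \<and>
           i'' \<in> hom C (Cod C m) P \<and> Cmp C p'' i'' = Zer C (Cod C m) (Dom C u) \<and> Cmp C a' i'' = i' \<and>
           (\<exists>s\<in>hom C (Dom C u) P. Cmp C p'' s = Idt C (Dom C u))"
    using po p' p'i' p'b' pb i'' p''i'' a'i'' s ps homD(2,3)[OF u] B1_def by auto
  show "\<exists>D i' b' p' P p'' a' i''.
           is_pushout C i m D i' b' \<and>
           p' \<in> hom C D (Cod C u) \<and> Cmp C p' i' = Zer C (Cod C m) (Cod C u) \<and> Cmp C p' b' = p \<and>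
           is_pullback C p' u P p'' a' \<and>
           i'' \<in> hom C (Cod C m) P \<and> Cmp C p'' i'' = Zer C (Cod C m) (Dom C u) \<and> Cmp C a' i'' = i' \<and>
           (\<exists>s\<in>hom C (Dom C u) P. Cmp C p'' s = Idt C (Dom C u))"
    by (intro exI) (rule fin)
qed

end

theorem lemma5p4:
  fixes C :: "('o, 'm) cat" and E :: "('m \<times> 'm) set" and I :: "'m set"
    and J :: "'j set" and A0 A1 :: "'j \<Rightarrow> 'o" and a :: "'j \<Rightarrow> 'm"
    and S0 S1 :: 'o and \<iota>0 \<iota>1 :: "'j \<Rightarrow> 'm" and u :: 'm
  assumes "exact_category C E"
    and "has_exact_coproducts C E TYPE('j)"
    and "left_closed_ideal C E I"
    and "\<forall>j\<in>J. a j \<in> hom C (A0 j) (A1 j) \<and> a j \<in> I"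
    and "is_coproduct C J A0 S0 \<iota>0"
    and "is_coproduct C J A1 S1 \<iota>1"
    and "u \<in> hom C S0 S1"
    and "\<forall>j\<in>J. Cmp C u (\<iota>0 j) = Cmp C (\<iota>1 j) (a j)"
  shows "u \<in> I"
proof -
  interpret exc C E by (rule exc.intro) (rule assms(1))
  obtain M where M: "M \<subseteq> Arr C" "I = left_perp C E M"
    using assms(3) unfolding left_closed_ideal_def by blast
  have a: "\<forall>j\<in>J. a j \<in> hom C (A0 j) (A1 j)" using assms(4) by blast
  have "\<forall>m\<in>M. Ext_zero C E u m"
  proof
    fix m assume mM: "m \<in> M"
    have "\<forall>j\<in>J. Ext_zero C E (a j) m" using assms(4) M mM unfolding left_perp_def by blast
    then show "Ext_zero C E u m"
      using main_ext[OF assms(5) assms(6) assms(7) a assms(8)] M mM by blast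
  qed
  then show ?thesis using M homD(1)[OF assms(7)] unfolding left_perp_def by blast
qed

end
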